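(* Let $k\ge1$, $-\frac{\pi}{2}\le\theta_1<\theta_2<\dots<\theta_{k+1}\le\frac{\pi}{2}$ and $\theta_{\min}=\min_{p\ne j}|\theta_p-\theta_j|$. Then $$\min_{\hat\theta_1,\dots,\hat\theta_k\in\mathbb R}\|\eta_{k+1,k}(\theta_1,\dots,\theta_{k+1},\hat\theta_1,\dots,\hat\theta_k)\|_\infty\ge\xi(k)\,\theta_{\min}^k.$$
   Context: For $z_1,\dots,z_p,\hat z_1,\dots,\hat z_q\in\mathbb C$, $\eta_{p,q}(z_1,\dots,z_p,\hat z_1,\dots,\hat z_q)\in\mathbb R^p$ is the vector whose $j$-th entry is $\prod_{l=1}^q|z_j-\hat z_l|$. For an integer $k\ge1$: $\xi(1)=\frac12$; $\xi(k)=\frac{(\frac{k-1}{2})!(\frac{k-3}{2})!}{4}$ if $k\ge3$ is odd; $\xi(k)=\frac{((\frac{k-2}{2})!)^2}{4}$ if $k$ is even. *)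

theory Defs
  imports Complex_Main
begin

text \<open>eta_{p,q}(z_1..z_p, zh_1..zh_q): vector in R^p (indexed 1..p) whose j-th entry
  is prod_{l=1..q} |z_j - zh_l|. Points are given as functions on indices 1..p / 1..q.\<close>
definition eta :: "nat \<Rightarrow> nat \<Rightarrow> (nat \<Rightarrow> complex) \<Rightarrow> (nat \<Rightarrow> complex) \<Rightarrow> nat \<Rightarrow> real" where
  "eta p q z zh j = (\<Prod>l=1..q. cmod (z j - zh l))"

definition linf_norm :: "nat \<Rightarrow> (nat \<Rightarrow> real) \<Rightarrow> real" where
  "linf_norm p v = Max ((\<lambda>j. \<bar>v j\<bar>) ` {1..p})"

definition xi :: "nat \<Rightarrow> real" where
  "xi k = (if k = 1 then 1/2
           else if odd k then fact ((k - 1) div 2) * fact ((k - 3) div 2) / 4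
           else (fact ((k - 2) div 2))^2 / 4)"

end

theory Submission
  imports Defs
begin

fun dd :: "(nat \<Rightarrow> real) \<Rightarrow> (real \<Rightarrow> real) \<Rightarrow> nat \<Rightarrow> nat \<Rightarrow> real" where
  "dd x f i 0 = f (x i)"
| "dd x f i (Suc r) = (dd x f (Suc i) r - dd x f i r) / (x (i + Suc r) - x i)"

lemma dd_const: "dd x (\<lambda>_. c) i r = (if r = 0 then c else 0)"
  by (induction r arbitrary: i) auto

lemma dd_leib:
  assumes inc: "\<forall>j. x j < x (Suc j)"
  shows "dd x (\<lambda>y. (y - a) * g y) i r
     = (x i - a) * dd x g i r + (if r = 0 then 0 else dd x g (Suc i) (r - 1))"
proof (induction r arbitrary: i)
  case 0 show ?case by simp
next
  case (Suc r)
  have sm: "strict_mono x" using inc by (simp add: strict_mono_Suc_iff)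
  have D: "x (i + Suc r) - x i \<noteq> 0" using strict_monoD[OF sm, of i "i + Suc r"] by simp
  show ?case
  proof (cases r)
    case 0
    then show ?thesis using D by (simp add: field_simps)
  next
    case (Suc r')
    have D2: "x (Suc i + Suc r') - x (Suc i) \<noteq> 0"
      using strict_monoD[OF sm, of "Suc i" "Suc i + Suc r'"] by simp
    have E: "dd x g (Suc i) r = (dd x g (Suc (Suc i)) r' - dd x g (Suc i) r') / (x (Suc i + Suc r') - x (Suc i))"
      using Suc by simp
    have I1: "dd x (\<lambda>y. (y - a) * g y) (Suc i) r = (x (Suc i) - a) * dd x g (Suc i) r + dd x g (Suc (Suc i)) r'"
      using Suc.IH[of "Suc i"] Suc by simp
    have I2: "dd x (\<lambda>y. (y - a) * g y) i r = (x i - a) * dd x g i r + dd x g (Suc i) r'"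
      using Suc.IH[of i] Suc by simp
    have E2: "dd x g (Suc i) r * (x (Suc i + Suc r') - x (Suc i)) = dd x g (Suc (Suc i)) r' - dd x g (Suc i) r'"
      using E D2 by simp
    have idx: "i + Suc r = Suc i + Suc r'" using Suc by simp
    have alg: "\<And>A B C P D d x0 x1 x2 :: real. D = x2 - x0 \<Longrightarrow> d = x2 - x1 \<Longrightarrow> D \<noteq> 0 \<Longrightarrow> P * d = A - B
       \<Longrightarrow> ((x1 - a) * P + A - ((x0 - a) * C + B)) / D = (x0 - a) * ((P - C) / D) + P"
    proof -
      fix A B C P D d x0 x1 x2 :: real
      assume h: "D = x2 - x0" "d = x2 - x1" "D \<noteq> 0" "P * d = A - B"
      have ed: "d = D + x0 - x1" using h(1,2) by simp
      have "A = B + P * d" using h(4) by simp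
      then have eA: "A = B + P * (D + x0 - x1)" unfolding ed .
      have "(x1 - a) * P + A - ((x0 - a) * C + B) = ((x0 - a) * (P - C)) + P * D"
        unfolding eA by (simp add: algebra_simps)
      then show "((x1 - a) * P + A - ((x0 - a) * C + B)) / D = (x0 - a) * ((P - C) / D) + P"
        using h(3) by (simp add: add_divide_distrib)
    qed
    show ?thesis
      unfolding dd.simps I1 I2 using idx
      by (simp only: if_False nat.simps diff_Suc_1 Suc) (rule alg[OF refl refl D[unfolded idx] E2[unfolded Suc]])
  qed
qed

lemma dd_prod:
  assumes inc: "\<forall>j. x j < x (Suc j)"
  shows "m \<le> r \<Longrightarrow> dd x (\<lambda>y. \<Prod>l=1..m. (y - h l)) i r = (if r = m then 1 else 0)"
proof (induction m arbitrary: i r)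
  case 0
  then show ?case using dd_const[of x 1 i r] by simp
next
  case (Suc m)
  have f: "(\<lambda>y. \<Prod>l=1..Suc m. (y - h l)) = (\<lambda>y. (y - h (Suc m)) * (\<Prod>l=1..m. (y - h l)))"
    by (simp add: prod.cl_ivl_Suc mult.commute)
  have r0: "r \<noteq> 0" using Suc.prems by simp
  have a: "dd x (\<lambda>y. \<Prod>l=1..m. (y - h l)) i r = 0" using Suc.IH[of r i] Suc.prems by simp
  have b: "dd x (\<lambda>y. \<Prod>l=1..m. (y - h l)) (Suc i) (r - 1) = (if r - 1 = m then 1 else 0)"
    using Suc.IH[of "r - 1" "Suc i"] Suc.prems by simp
  show ?case unfolding f dd_leib[OF inc] a b using r0 Suc.prems by auto
qed

lemma dd_bound:
  assumes gap: "\<forall>j j'. lo \<le> j \<longrightarrow> j \<le> j' \<longrightarrow> j' \<le> hi \<longrightarrow> real (j' - j) * d \<le> x j' - x j"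
    and d: "d > 0" and fb: "\<forall>j. lo \<le> j \<longrightarrow> j \<le> hi \<longrightarrow> \<bar>f (x j)\<bar> \<le> M"
  shows "lo \<le> i \<Longrightarrow> i + r \<le> hi \<Longrightarrow> \<bar>dd x f i r\<bar> \<le> 2^r * M / (fact r * d^r)"
proof (induction r arbitrary: i)
  case 0
  then show ?case using fb by simp
next
  case (Suc r)
  define C where "C = 2^r * M / (fact r * d^r)"
  have A: "\<bar>dd x f (Suc i) r\<bar> \<le> C" using Suc.IH[of "Suc i"] Suc.prems C_def by simp
  have B: "\<bar>dd x f i r\<bar> \<le> C" using Suc.IH[of i] Suc.prems C_def by simp
  have g: "real (Suc r) * d \<le> x (i + Suc r) - x i" using gap Suc.prems
    by (metis add_diff_cancel_left' le_add1)
  have Dp: "0 < real (Suc r) * d" using d by simp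
  have C0: "0 \<le> C" using B by linarith
  have pos: "x (i + Suc r) - x i > 0" using g Dp by linarith
  have "\<bar>dd x f i (Suc r)\<bar> = \<bar>dd x f (Suc i) r - dd x f i r\<bar> / (x (i + Suc r) - x i)"
    using pos by (simp only: dd.simps abs_divide abs_of_pos)
  also have "\<dots> \<le> (2 * C) / (x (i + Suc r) - x i)"
    using A B g Dp by (intro divide_right_mono) linarith+
  also have "\<dots> \<le> (2 * C) / (real (Suc r) * d)"
    using g Dp C0 by (intro divide_left_mono) auto
  also have "\<dots> = 2^Suc r * M / (fact (Suc r) * d^Suc r)"
    unfolding C_def by (simp add: field_simps)
  finally show ?case .
qed

lemma even_num: "(fact n)^2 / 4 \<le> (fact (2*n+2) :: real) / 4^(n+1)"
proof (induction n)
  case 0 then show ?case by simp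
next
  case (Suc n)
  have e1: "(fact (Suc n) :: real)^2 / 4 = (real (Suc n))^2 * ((fact n)^2 / 4)" by (simp add: power_mult_distrib)
  have e2: "(fact (2 * Suc n + 2) :: real) / 4^(Suc n + 1) = (real (2*n+4) * real (2*n+3) / 4) * (fact (2*n+2) / 4^(n+1))"
    by (simp add: fact_Suc field_simps numeral_eq_Suc)
  have le: "(real (Suc n))^2 \<le> real (2*n+4) * real (2*n+3) / 4" by (simp add: power2_eq_square field_simps)
  have nn: "0 \<le> (fact n :: real)^2 / 4" by simp
  show ?case unfolding e1 e2 using Suc.IH le nn
    by (meson mult_mono order_trans zero_le_power2)
qed

lemma odd_num: "fact (n+1) * fact n / 4 \<le> (fact (2*n+3) :: real) / 2^(2*n+3)"
proof (induction n)
  case 0 then show ?case by (simp add: numeral_eq_Suc)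
next
  case (Suc n)
  have e1: "(fact (Suc n + 1) :: real) * fact (Suc n) / 4 = (real (n+2) * real (n+1)) * (fact (n+1) * fact n / 4)"
    by (simp add: fact_Suc field_simps)
  have e2: "(fact (2 * Suc n + 3) :: real) / 2^(2 * Suc n + 3) = (real (2*n+5) * real (2*n+4) / 4) * (fact (2*n+3) / 2^(2*n+3))"
    by (simp add: fact_Suc field_simps numeral_eq_Suc)
  have le: "real (n+2) * real (n+1) \<le> real (2*n+5) * real (2*n+4) / 4" by (simp add: field_simps)
  have nn: "0 \<le> (fact (n+1) * fact n :: real) / 4" by simp
  have nn2: "0 \<le> real (n+2) * real (n+1)" by simp
  show ?case unfolding e1 e2 using Suc.IH le nn nn2
    by (meson mult_mono order_trans)
qed

lemma xi_le: "k \<ge> 1 \<Longrightarrow> xi k \<le> fact k / 2^k"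
proof -
  assume k: "k \<ge> 1"
  consider "k = 1" | n where "k = 2*n+2" | n where "k = 2*n+3"
  proof -
    have "k = 1 \<or> (\<exists>n. k = 2*n+2) \<or> (\<exists>n. k = 2*n+3)"
    proof (cases "even k")
      case True then obtain m where "k = 2*m" by blast
      then have "k = 2*(m-1)+2" using k by simp
      then show ?thesis by blast
    next
      case False then obtain m where m: "k = 2*m+1" using oddE by blast
      show ?thesis
      proof (cases m)
        case 0 then show ?thesis using m by simp
      next
        case (Suc m') then have "k = 2*m'+3" using m by simp
        then show ?thesis by blast
      qed
    qed
    then show "(k = 1 \<Longrightarrow> thesis) \<Longrightarrow> (\<And>n. k = 2*n+2 \<Longrightarrow> thesis) \<Longrightarrow> (\<And>n. k = 2*n+3 \<Longrightarrow> thesis) \<Longrightarrow> thesis" for thesis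
      by blast
  qed
  then show ?thesis
  proof cases
    case 1 then show ?thesis by (simp add: xi_def)
  next
    case 2
    have "xi k = (fact n)^2 / 4" unfolding xi_def 2 by simp
    moreover have "(2::real)^k = 4^(n+1)" unfolding 2
      by (simp add: power_mult power_add)
    then have "(fact (2*n+2) :: real) / 4^(n+1) = fact k / 2^k" unfolding 2 by simp
    ultimately show ?thesis using even_num[of n] by linarith
  next
    case 3
    have "xi k = fact (n+1) * fact n / 4" unfolding xi_def 3 by simp
    then show ?thesis using odd_num[of n] unfolding 3 by linarith
  qed
qed

lemma strict_chain:
  assumes "\<forall>j\<in>{a..<b}. x j < x (Suc j)"
  shows "a \<le> i \<Longrightarrow> i < j \<Longrightarrow> j \<le> b \<Longrightarrow> (x i :: real) < x j"
proof (induction j)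
  case 0 then show ?case by simp
next
  case (Suc j)
  have s: "x j < x (Suc j)" using assms Suc.prems by simp
  show ?case
  proof (cases "i = j")
    case True then show ?thesis using s by simp
  next
    case False then show ?thesis using Suc s by simp
  qed
qed

lemma gap_chain:
  assumes "\<forall>j\<in>{a..<b}. x j + d \<le> x (Suc j)"
  shows "a \<le> i \<Longrightarrow> i \<le> j \<Longrightarrow> j \<le> b \<Longrightarrow> (x i :: real) + real (j - i) * d \<le> x j"
proof (induction j)
  case 0 then show ?case by simp
next
  case (Suc j)
  show ?case
  proof (cases "i = Suc j")
    case True then show ?thesis by simp
  next
    case False
    then have ij: "i \<le> j" using Suc.prems by simp
    have s: "x j + d \<le> x (Suc j)" using assms Suc.prems ij by simp
    have e: "real (Suc j - i) = real (j - i) + 1" using ij by (simp add: Suc_diff_le)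
    have ih: "x i + real (j - i) * d \<le> x j" using Suc.IH[OF Suc.prems(1) ij] Suc.prems(3) by simp
    show ?thesis unfolding e distrib_right using ih s by linarith
  qed
qed

theorem lemma3p6:
  fixes k :: nat and \<theta> :: "nat \<Rightarrow> real"
  assumes "k \<ge> 1"
    and "\<forall>j\<in>{1..k+1}. - (pi/2) \<le> \<theta> j \<and> \<theta> j \<le> pi/2"
    and "\<forall>j\<in>{1..k}. \<theta> j < \<theta> (j+1)"
  shows "\<forall>\<theta>h :: nat \<Rightarrow> real.
     linf_norm (k+1) (eta (k+1) k (\<lambda>j. complex_of_real (\<theta> j)) (\<lambda>l. complex_of_real (\<theta>h l)))
       \<ge> xi k * (Min {\<bar>\<theta> p - \<theta> j\<bar> | p j. p \<in> {1..k+1} \<and> j \<in> {1..k+1} \<and> p \<noteq> j}) ^ k"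
proof
  fix \<theta>h :: "nat \<Rightarrow> real"
  define S where "S = {\<bar>\<theta> p - \<theta> j\<bar> | p j. p \<in> {1..k+1} \<and> j \<in> {1..k+1} \<and> p \<noteq> j}"
  define d where "d = Min S"
  define M where "M = linf_norm (k+1) (eta (k+1) k (\<lambda>j. complex_of_real (\<theta> j)) (\<lambda>l. complex_of_real (\<theta>h l)))"
  have inc: "\<forall>j\<in>{1..<k+1}. \<theta> j < \<theta> (Suc j)" using assms(3) by auto
  have S_sub: "S \<subseteq> (\<lambda>(p,j). \<bar>\<theta> p - \<theta> j\<bar>) ` ({1..k+1} \<times> {1..k+1})"
    unfolding S_def by auto
  have finS: "finite S" using S_sub finite_subset by blast
  have neS: "\<bar>\<theta> 1 - \<theta> 2\<bar> \<in> S" unfolding S_def using assms(1)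
    by (intro CollectI exI[of _ 1] exI[of _ 2]) simp
  have posS: "\<forall>s\<in>S. s > 0"
  proof
    fix s assume "s \<in> S"
    then obtain p j where pj: "s = \<bar>\<theta> p - \<theta> j\<bar>" "p \<in> {1..k+1}" "j \<in> {1..k+1}" "p \<noteq> j"
      unfolding S_def by blast
    show "s > 0"
    proof (cases "p < j")
      case True then show ?thesis using strict_chain[OF inc, of p j] pj by simp
    next
      case False then have "j < p" using pj by simp
      then show ?thesis using strict_chain[OF inc, of j p] pj by simp
    qed
  qed
  have dS: "d \<in> S" unfolding d_def using finS neS Min_in by blast
  have dpos: "d > 0" using dS posS by blast
  have cons: "\<forall>j\<in>{1..<k+1}. \<theta> j + d \<le> \<theta> (Suc j)"
  proof
    fix j assume j: "j \<in> {1..<k+1}"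
    have "\<bar>\<theta> (Suc j) - \<theta> j\<bar> \<in> S" unfolding S_def using j by force
    then have "d \<le> \<bar>\<theta> (Suc j) - \<theta> j\<bar>" unfolding d_def using finS Min_le by blast
    moreover have "\<theta> j < \<theta> (Suc j)" using inc j by blast
    ultimately show "\<theta> j + d \<le> \<theta> (Suc j)" by simp
  qed
  define x' where "x' j = (if j < 1 then \<theta> 1 - 1 else if j \<le> k+1 then \<theta> j else \<theta> (k+1) + real (j - (k+1)))" for j
  have x'\<theta>: "x' j = \<theta> j" if "1 \<le> j" "j \<le> k+1" for j using that unfolding x'_def by simp
  have incx: "\<forall>j. x' j < x' (Suc j)"
  proof
    fix j
    consider "j = 0" | "1 \<le> j \<and> j < k+1" | "j = k+1" | "j > k+1" by linarith
    then show "x' j < x' (Suc j)"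
    proof cases
      case 1 then show ?thesis unfolding x'_def by simp
    next
      case 2 then show ?thesis using inc unfolding x'_def by auto
    next
      case 3 then show ?thesis unfolding x'_def by simp
    next
      case 4 then show ?thesis unfolding x'_def by simp
    qed
  qed
  define f where "f y = (\<Prod>l=1..k. (y - \<theta>h l))" for y
  have one: "dd x' f 1 k = 1" using dd_prod[OF incx, of k k \<theta>h 1] unfolding f_def by simp
  have gapx: "\<forall>j j'. 1 \<le> j \<longrightarrow> j \<le> j' \<longrightarrow> j' \<le> k+1 \<longrightarrow> real (j' - j) * d \<le> x' j' - x' j"
    using gap_chain[OF cons] x'\<theta> by fastforce
  have fb: "\<forall>j. 1 \<le> j \<longrightarrow> j \<le> k+1 \<longrightarrow> \<bar>f (x' j)\<bar> \<le> M"
  proof (intro allI impI)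
    fix j assume j: "1 \<le> j" "j \<le> k+1"
    have "eta (k+1) k (\<lambda>j. complex_of_real (\<theta> j)) (\<lambda>l. complex_of_real (\<theta>h l)) j = \<bar>f (x' j)\<bar>"
      unfolding eta_def f_def x'\<theta>[OF j] abs_prod
      by (simp flip: of_real_diff)
    then have "\<bar>f (x' j)\<bar> = \<bar>eta (k+1) k (\<lambda>j. complex_of_real (\<theta> j)) (\<lambda>l. complex_of_real (\<theta>h l)) j\<bar>" by simp
    also have "\<dots> \<le> M" unfolding M_def linf_norm_def using j by (intro Max_ge) auto
    finally show "\<bar>f (x' j)\<bar> \<le> M" .
  qed
  have "\<bar>dd x' f 1 k\<bar> \<le> 2^k * M / (fact k * d^k)"
    using dd_bound[OF gapx dpos fb] by simp
  then have "1 \<le> 2^k * M / (fact k * d^k)" using one by simp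
  then have b1: "fact k * d^k / 2^k \<le> M" using dpos by (simp add: field_simps)
  have "xi k * d^k \<le> fact k / 2^k * d^k"
    using xi_le[OF assms(1)] dpos by (intro mult_right_mono) auto
  also have "\<dots> = fact k * d^k / 2^k" by simp
  finally show "M \<ge> xi k * (Min S) ^ k" using b1 unfolding d_def by simp
qed

end
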